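(* Let $S$ be a finite set of distinct lines in the plane, each having one of three distinct slopes. Consider the greedy algorithm that first repeatedly chooses (in any order) a point lying on three not-yet-hit lines of $S$ (necessarily one of each slope) and marks these three lines as hit, until no such point exists; and then, on the remaining unhit lines (no three of which are concurrent), repeatedly chooses a point at which two unhit lines cross, taking the two lines from the two slope classes currently having the largest numbers of unhit lines, and marks them as hit, until no two unhit lines cross; and finally places one point on each remaining unhit line. The number of points chosen by this algorithm is at most $\frac{7}{5}$ times the minimum cardinality of a hitting set for $S$.
   Context: A hitting set for a set of lines is a finite set of points such that every line contains at least one of the points. *)

theory Defs
  imports Main "HOL.Real"
begin

type_synonym point = "real \<times> real"
type_synonym line = "point set"

definition is_line :: "line \<Rightarrow> bool" where
  "is_line L \<longleftrightarrow> (\<exists>a b c. (a \<noteq> 0 \<or> b \<noteq> 0) \<and> L = {p. a * fst p + b * snd p = c})"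

text \<open>The slope (direction) of a line: the set of translation vectors preserving it.
  Two lines have the same slope iff they are parallel.\<close>
definition slope :: "line \<Rightarrow> point set" where
  "slope L = {v. \<forall>p\<in>L. (fst p + fst v, snd p + snd v) \<in> L}"

definition hitting_set :: "line set \<Rightarrow> point set \<Rightarrow> bool" where
  "hitting_set S H \<longleftrightarrow> finite H \<and> (\<forall>L\<in>S. \<exists>p\<in>H. p \<in> L)"

definition hitting_number :: "line set \<Rightarrow> nat" where
  "hitting_number S = (LEAST k. \<exists>H. hitting_set S H \<and> card H = k)"

definition cnt :: "line set \<Rightarrow> point set \<Rightarrow> nat" where
  "cnt U d = card {L\<in>U. slope L = d}"

definition step1 :: "line set \<times> point list \<Rightarrow> line set \<times> point list \<Rightarrow> bool" where
  "step1 s t \<longleftrightarrow> (\<exists>p L1 L2 L3. L1 \<in> fst s \<and> L2 \<in> fst s \<and> L3 \<in> fst s \<and>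
      L1 \<noteq> L2 \<and> L1 \<noteq> L3 \<and> L2 \<noteq> L3 \<and> p \<in> L1 \<and> p \<in> L2 \<and> p \<in> L3 \<and>
      t = (fst s - {L1, L2, L3}, snd s @ [p]))"

definition final1 :: "line set \<Rightarrow> bool" where
  "final1 U \<longleftrightarrow> \<not> (\<exists>p L1 L2 L3. L1 \<in> U \<and> L2 \<in> U \<and> L3 \<in> U \<and>
      L1 \<noteq> L2 \<and> L1 \<noteq> L3 \<and> L2 \<noteq> L3 \<and> p \<in> L1 \<and> p \<in> L2 \<and> p \<in> L3)"

text \<open>Phase 2 step: a crossing point of two unhit lines taken from two slope classes
  having the largest numbers of unhit lines (ties broken arbitrarily): every other
  slope class has at most as many unhit lines as each of the two chosen classes.\<close>
definition step2 :: "line set \<times> point list \<Rightarrow> line set \<times> point list \<Rightarrow> bool" where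
  "step2 s t \<longleftrightarrow> (\<exists>p L1 L2. L1 \<in> fst s \<and> L2 \<in> fst s \<and> L1 \<noteq> L2 \<and>
      slope L1 \<noteq> slope L2 \<and> p \<in> L1 \<and> p \<in> L2 \<and>
      (\<forall>L\<in>fst s. slope L \<noteq> slope L1 \<and> slope L \<noteq> slope L2 \<longrightarrow>
          cnt (fst s) (slope L) \<le> cnt (fst s) (slope L1) \<and>
          cnt (fst s) (slope L) \<le> cnt (fst s) (slope L2)) \<and>
      t = (fst s - {L1, L2}, snd s @ [p]))"

definition final2 :: "line set \<Rightarrow> bool" where
  "final2 U \<longleftrightarrow> \<not> (\<exists>p L1 L2. L1 \<in> U \<and> L2 \<in> U \<and> L1 \<noteq> L2 \<and> p \<in> L1 \<and> p \<in> L2)"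

definition greedy_output :: "line set \<Rightarrow> point list \<Rightarrow> bool" where
  "greedy_output S pts \<longleftrightarrow> (\<exists>U1 P1 U2 P2 (f :: line \<Rightarrow> point) xs.
      step1\<^sup>*\<^sup>* (S, []) (U1, P1) \<and> final1 U1 \<and>
      step2\<^sup>*\<^sup>* (U1, P1) (U2, P2) \<and> final2 U2 \<and>
      distinct xs \<and> set xs = U2 \<and> (\<forall>L\<in>U2. f L \<in> L) \<and>
      pts = P2 @ map f xs)"

end

theory Submission
  imports Defs
begin


lemma slope_line:
  assumes ab: "a \<noteq> 0 \<or> b \<noteq> 0"
  shows "slope {p. a * fst p + b * snd p = c} = {v. a * fst v + b * snd v = (0::real)}"
proof
  show "{v. a * fst v + b * snd v = 0} \<subseteq> slope {p. a * fst p + b * snd p = c}"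
    by (auto simp: slope_def algebra_simps)
next
  show "slope {p. a * fst p + b * snd p = c} \<subseteq> {v. a * fst v + b * snd v = 0}"
  proof
    fix v assume v: "v \<in> slope {p. a * fst p + b * snd p = c}"
    obtain p0 where p0: "a * fst p0 + b * snd p0 = c"
    proof (cases "a = 0")
      case True
      then have "b \<noteq> 0" using ab by simp
      then show ?thesis using True that[of "(0, c/b)"] by simp
    next
      case False
      then show ?thesis using that[of "(c/a, 0)"] by simp
    qed
    then have "a * (fst p0 + fst v) + b * (snd p0 + snd v) = c" using v by (auto simp: slope_def)
    then show "v \<in> {v. a * fst v + b * snd v = 0}" using p0 by (simp add: algebra_simps)
  qed
qed

lemma line_rep:
  assumes "is_line L"
  obtains a b c where "a \<noteq> 0 \<or> b \<noteq> 0" "L = {p. a * fst p + b * snd p = c}"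
    "slope L = {v. a * fst v + b * snd v = 0}"
  using assms slope_line unfolding is_line_def by blast

lemma line_through:
  assumes "is_line L" "p \<in> L"
  shows "L = {q. (fst q - fst p, snd q - snd p) \<in> slope L}"
proof -
  obtain a b c where r: "a \<noteq> 0 \<or> b \<noteq> 0" "L = {p. a * fst p + b * snd p = c}"
    "slope L = {v. a * fst v + b * snd v = 0}" using line_rep[OF assms(1)] by blast
  show ?thesis apply (subst r(3)) using assms(2) r(2) by (auto simp: algebra_simps)
qed

lemma same_slope_eq:
  assumes "is_line L" "is_line L'" "p \<in> L" "p \<in> L'" "slope L = slope L'"
  shows "L = L'"
  using line_through[OF assms(1,3)] line_through[OF assms(2,4)] assms(5) by simp

lemma nonzero_dir:
  fixes a b v1 v2 w1 w2 :: real
  assumes "a \<noteq> 0 \<or> b \<noteq> 0" "v1 \<noteq> 0 \<or> v2 \<noteq> 0" "a * v1 + b * v2 = 0"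
  shows "a * w1 + b * w2 = 0 \<longleftrightarrow> v2 * w1 = v1 * w2"
proof -
  have bv: "b * v2 = - (a * v1)" using assms(3) by (simp add: eq_neg_iff_add_eq_0)
  have e1: "v2 * (a * w1 + b * w2) = a * (v2 * w1 - v1 * w2)"
  proof -
    have "v2 * (a * w1 + b * w2) = a * v2 * w1 + (b * v2) * w2" by (simp add: algebra_simps)
    also have "\<dots> = a * (v2 * w1 - v1 * w2)" unfolding bv by (simp add: algebra_simps)
    finally show ?thesis .
  qed
  have av: "a * v1 = - (b * v2)" using assms(3) by (simp add: eq_neg_iff_add_eq_0 add.commute)
  have e2: "v1 * (a * w1 + b * w2) = - b * (v2 * w1 - v1 * w2)"
  proof -
    have "v1 * (a * w1 + b * w2) = (a * v1) * w1 + b * v1 * w2" by (simp add: algebra_simps)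
    also have "\<dots> = - b * (v2 * w1 - v1 * w2)" unfolding av by (simp add: algebra_simps)
    finally show ?thesis .
  qed
  show ?thesis using e1 e2 assms(1,2) by (metis eq_iff_diff_eq_0 mult_eq_0_iff neg_equal_0_iff_equal)
qed

lemma two_points_eq:
  assumes "is_line L" "is_line L'" "p \<in> L" "p \<in> L'" "q \<in> L" "q \<in> L'" "p \<noteq> q"
  shows "L = L'"
proof -
  obtain a b c where r: "a \<noteq> 0 \<or> b \<noteq> 0" "L = {p. a * fst p + b * snd p = c}"
    "slope L = {v. a * fst v + b * snd v = 0}" using line_rep[OF assms(1)] by blast
  obtain a' b' c' where r': "a' \<noteq> 0 \<or> b' \<noteq> 0" "L' = {p. a' * fst p + b' * snd p = c'}"
    "slope L' = {v. a' * fst v + b' * snd v = 0}" using line_rep[OF assms(2)] by blast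
  define v1 where "v1 = fst q - fst p"
  define v2 where "v2 = snd q - snd p"
  have v: "v1 \<noteq> 0 \<or> v2 \<noteq> 0" using assms(7) unfolding v1_def v2_def by (auto simp: prod_eq_iff)
  have h1: "a * v1 + b * v2 = 0" using assms(3,5) r(2) unfolding v1_def v2_def by (simp add: algebra_simps)
  have h2: "a' * v1 + b' * v2 = 0" using assms(4,6) r'(2) unfolding v1_def v2_def by (simp add: algebra_simps)
  have "slope L = {w. v2 * fst w = v1 * snd w}"
    unfolding r(3) proof (rule set_eqI)
    fix w :: "real \<times> real" show "(w \<in> {v. a * fst v + b * snd v = 0}) = (w \<in> {w. v2 * fst w = v1 * snd w})"
      using nonzero_dir[OF r(1) v h1, of "fst w" "snd w"] by simp
  qed
  moreover have "slope L' = {w. v2 * fst w = v1 * snd w}"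
    unfolding r'(3) proof (rule set_eqI)
    fix w :: "real \<times> real" show "(w \<in> {v. a' * fst v + b' * snd v = 0}) = (w \<in> {w. v2 * fst w = v1 * snd w})"
      using nonzero_dir[OF r'(1) v h2, of "fst w" "snd w"] by simp
  qed
  ultimately have "slope L = slope L'" by simp
  then show ?thesis using same_slope_eq assms by blast
qed

lemma diff_slope_meet:
  assumes "is_line L" "is_line L'" "slope L \<noteq> slope L'"
  shows "\<exists>p. p \<in> L \<and> p \<in> L'"
proof -
  obtain a b c where r: "a \<noteq> 0 \<or> b \<noteq> 0" "L = {p. a * fst p + b * snd p = c}"
    "slope L = {v. a * fst v + b * snd v = 0}" using line_rep[OF assms(1)] by blast
  obtain a' b' c' where r': "a' \<noteq> 0 \<or> b' \<noteq> 0" "L' = {p. a' * fst p + b' * snd p = c'}"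
    "slope L' = {v. a' * fst v + b' * snd v = 0}" using line_rep[OF assms(2)] by blast
  have D: "a * b' - a' * b \<noteq> 0"
  proof
    assume D0: "a * b' - a' * b = 0"
    have "a * (-b) + b * a = 0" by simp
    have v: "- b \<noteq> 0 \<or> a \<noteq> 0" using r(1) by auto
    have "a' * (-b) + b' * a = 0" using D0 by (simp add: algebra_simps)
    have "slope L = {w. a * fst w = - b * snd w}"
      unfolding r(3) proof (rule set_eqI)
      fix w :: "real \<times> real" show "(w \<in> {v. a * fst v + b * snd v = 0}) = (w \<in> {w. a * fst w = - b * snd w})"
        using nonzero_dir[OF r(1) v \<open>a * (-b) + b * a = 0\<close>, of "fst w" "snd w"] by simp
    qed
    moreover have "slope L' = {w. a * fst w = - b * snd w}"
      unfolding r'(3) proof (rule set_eqI)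
      fix w :: "real \<times> real" show "(w \<in> {v. a' * fst v + b' * snd v = 0}) = (w \<in> {w. a * fst w = - b * snd w})"
        using nonzero_dir[OF r'(1) v \<open>a' * (-b) + b' * a = 0\<close>, of "fst w" "snd w"] by simp
    qed
    ultimately have "slope L = slope L'" by simp
    then show False using assms(3) by simp
  qed
  define x where "x = (c * b' - c' * b) / (a * b' - a' * b)"
  define y where "y = (a * c' - a' * c) / (a * b' - a' * b)"
  have n1: "a * x + b * y = (a * (c * b' - c' * b) + b * (a * c' - a' * c)) / (a * b' - a' * b)"
    unfolding x_def y_def by (simp add: add_divide_distrib)
  have n2: "a * (c * b' - c' * b) + b * (a * c' - a' * c) = c * (a * b' - a' * b)" by (simp add: algebra_simps)
  have "a * x + b * y = c" using D n1 n2 by simp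
  moreover
  have n3: "a' * x + b' * y = (a' * (c * b' - c' * b) + b' * (a * c' - a' * c)) / (a * b' - a' * b)"
    unfolding x_def y_def by (simp add: add_divide_distrib)
  have n4: "a' * (c * b' - c' * b) + b' * (a * c' - a' * c) = c' * (a * b' - a' * b)" by (simp add: algebra_simps)
  have "a' * x + b' * y = c'" using D n3 n4 by simp
  ultimately show ?thesis using r(2) r'(2) by (intro exI[of _ "(x,y)"]) auto
qed



definition lines_at :: "line set \<Rightarrow> point \<Rightarrow> line set" where
  "lines_at S p = {L\<in>S. p \<in> L}"

lemma three_distinct:
  assumes "finite A" "3 \<le> card A"
  shows "\<exists>x y z. x \<in> A \<and> y \<in> A \<and> z \<in> A \<and> x \<noteq> y \<and> x \<noteq> z \<and> y \<noteq> z"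
proof -
  have "A \<noteq> {}" using assms by auto
  then obtain x where x: "x \<in> A" by blast
  have c1: "2 \<le> card (A - {x})" using assms x by simp
  then have "card (A - {x}) \<noteq> 0" by simp
  then have "A - {x} \<noteq> {}" by (metis card.empty)
  then obtain y where y: "y \<in> A - {x}" by blast
  have "1 \<le> card (A - {x} - {y})" using c1 y assms by simp
  then have "card (A - {x} - {y}) \<noteq> 0" by simp
  then have "A - {x} - {y} \<noteq> {}" by (metis card.empty)
  then obtain z where z: "z \<in> A - {x} - {y}" by blast
  show ?thesis using x y z by blast
qed

lemma line_nonempty:
  assumes "is_line L" shows "\<exists>p. p \<in> L"
proof -
  obtain a b c where r: "a \<noteq> 0 \<or> b \<noteq> 0" "L = {p. a * fst p + b * snd p = c}"
    using assms unfolding is_line_def by blast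
  show ?thesis
  proof (cases "a = 0")
    case True
    then show ?thesis using r by (intro exI[of _ "(0, c/b)"]) auto
  next
    case False
    then show ?thesis using r by (intro exI[of _ "(c/a, 0)"]) auto
  qed
qed

lemma arith_final:
  fixes a b K n :: nat
  assumes h1: "n + 3*b \<le> 3*K" and h2: "n \<le> 2*K" and h3: "0 < b \<Longrightarrow> 3 \<le> K"
  shows "5*((a+b) + max (a+K-(a+b)) ((n+1) div 2)) \<le> 7*(a+K)"
proof -
  define c where "c = (n+1) div 2"
  have bK: "b \<le> K" using h1 by linarith
  have cpar: "2*c = n \<or> 2*c = n + 1" unfolding c_def by presburger
  have A: "5*((a+b) + (a+K-(a+b))) \<le> 7*(a+K)" using bK by simp
  have B: "5*((a+b) + c) \<le> 7*(a+K)"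
  proof (cases "b = 0")
    case True
    have "c \<le> K" using cpar h2 by linarith
    then show ?thesis using True by simp
  next
    case False
    then have K3: "3 \<le> K" using h3 by simp
    have cK: "c \<le> K" using cpar h2 by linarith
    have "5*(b + c) \<le> 7*K"
    proof (cases "5 \<le> K")
      case True
      from cpar show ?thesis
      proof
        assume e: "2*c = n"
        have "3*b + 2*c \<le> 3*K" using h1 e by simp
        then have "15*b + 15*c \<le> 15*K + 5*c" by simp
        then have "15*(b + c) \<le> 21*K" using cK True by simp
        then show ?thesis by simp
      next
        assume e: "2*c = n+1"
        have "3*b + 2*c \<le> 3*K + 1" using h1 e by simp
        then have "15*b + 15*c \<le> 15*K + 5*c + 5" by simp
        then have "15*(b + c) \<le> 21*K" using cK True by simp
        then show ?thesis by simp
      qed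
    next
      case False
      then have "K = 3 \<or> K = 4" using K3 by linarith
      then show ?thesis
      proof
        assume "K = 3"
        then have "b \<in> {1,2,3}" using bK False \<open>b \<noteq> 0\<close> by auto
        then show ?thesis using \<open>K = 3\<close> cpar h1 h2 cK by auto
      next
        assume "K = 4"
        then have "b \<in> {1,2,3,4}" using bK False \<open>b \<noteq> 0\<close> by auto
        then show ?thesis using \<open>K = 4\<close> cpar h1 h2 cK by auto
      qed
    qed
    then show ?thesis by simp
  qed
  show ?thesis using A B unfolding c_def by (simp add: max_def)
qed

context
  fixes S :: "line set"
  assumes fin: "finite S" and lin: "\<forall>L\<in>S. is_line L" and sl: "card (slope ` S) \<le> 3"
begin

lemma inj_slope_at: "inj_on slope (lines_at S p)"
  using same_slope_eq lin unfolding lines_at_def inj_on_def by blast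

lemma card_lines_at: "card (lines_at S p) \<le> 3"
proof -
  have "card (lines_at S p) = card (slope ` lines_at S p)" using inj_slope_at card_image by metis
  also have "\<dots> \<le> card (slope ` S)" using fin by (intro card_mono) (auto simp: lines_at_def)
  finally show ?thesis using sl by simp
qed

lemma finite_lines_at: "finite (lines_at S p)" using fin by (simp add: lines_at_def)

definition inv1 :: "line set \<times> point list \<Rightarrow> bool" where
  "inv1 s \<longleftrightarrow> fst s \<subseteq> S \<and> distinct (snd s) \<and>
     (\<forall>r\<in>set (snd s). card (lines_at S r) = 3 \<and> lines_at S r \<inter> fst s = {}) \<and>
     (\<forall>r\<in>set (snd s). \<forall>r'\<in>set (snd s). r \<noteq> r' \<longrightarrow> lines_at S r \<inter> lines_at S r' = {})"

lemma inv1_step: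
  assumes "step1 s t" "inv1 s" shows "inv1 t"
proof -
  obtain p L1 L2 L3 where st: "L1 \<in> fst s" "L2 \<in> fst s" "L3 \<in> fst s"
      "L1 \<noteq> L2" "L1 \<noteq> L3" "L2 \<noteq> L3" "p \<in> L1" "p \<in> L2" "p \<in> L3"
      "t = (fst s - {L1, L2, L3}, snd s @ [p])" using assms(1) unfolding step1_def by blast
  have sub: "fst s \<subseteq> S" using assms(2) by (simp add: inv1_def)
  have "{L1, L2, L3} \<subseteq> lines_at S p" using st sub by (auto simp: lines_at_def)
  moreover have "card {L1, L2, L3} = 3" using st by simp
  ultimately have la: "lines_at S p = {L1, L2, L3}"
    using card_lines_at[of p] finite_lines_at[of p]
    by (metis card_seteq)
  have pn: "p \<notin> set (snd s)"
  proof
    assume "p \<in> set (snd s)"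
    then have "lines_at S p \<inter> fst s = {}" using assms(2) by (simp add: inv1_def)
    then show False using la st by auto
  qed
  have I: "fst s \<subseteq> S" "distinct (snd s)"
     "\<forall>r\<in>set (snd s). card (lines_at S r) = 3 \<and> lines_at S r \<inter> fst s = {}"
     "\<forall>r\<in>set (snd s). \<forall>r'\<in>set (snd s). r \<noteq> r' \<longrightarrow> lines_at S r \<inter> lines_at S r' = {}"
    using assms(2) unfolding inv1_def by blast+
  have t1: "fst t \<subseteq> S" using I(1) st(10) by auto
  have t2: "distinct (snd t)" using I(2) pn st(10) by simp
  have t3: "\<forall>r\<in>set (snd t). card (lines_at S r) = 3 \<and> lines_at S r \<inter> fst t = {}"
  proof
    fix r assume r: "r \<in> set (snd t)"
    show "card (lines_at S r) = 3 \<and> lines_at S r \<inter> fst t = {}"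
    proof (cases "r = p")
      case True
      then show ?thesis using la st by auto
    next
      case False
      then have "r \<in> set (snd s)" using r st(10) by simp
      then show ?thesis using I(3) st(10) by auto
    qed
  qed
  have t4: "\<forall>r\<in>set (snd t). \<forall>r'\<in>set (snd t). r \<noteq> r' \<longrightarrow> lines_at S r \<inter> lines_at S r' = {}"
  proof (intro ballI impI)
    fix r r' assume r: "r \<in> set (snd t)" and r': "r' \<in> set (snd t)" and ne: "r \<noteq> r'"
    have pdisj: "lines_at S p \<inter> lines_at S q = {}" if "q \<in> set (snd s)" for q
      using I(3) that la st(1-3) by auto
    show "lines_at S r \<inter> lines_at S r' = {}"
    proof (cases "r = p")
      case True
      then have "r' \<in> set (snd s)" using r' ne st(10) by auto
      then show ?thesis using pdisj True by simp
    next
      case False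
      then have rs: "r \<in> set (snd s)" using r st(10) by auto
      show ?thesis
      proof (cases "r' = p")
        case True then show ?thesis using pdisj[OF rs] by blast
      next
        case False
        then have "r' \<in> set (snd s)" using r' st(10) by auto
        then show ?thesis using I(4) rs ne by blast
      qed
    qed
  qed
  show ?thesis unfolding inv1_def using t1 t2 t3 t4 by blast
qed

lemma inv1_reach:
  assumes "step1\<^sup>*\<^sup>* (S, []) t" shows "inv1 t"
  using assms
proof (induction rule: rtranclp_induct)
  case base
  then show ?case by (simp add: inv1_def)
next
  case (step y z)
  then show ?case using inv1_step by blast
qed

end

lemma final2_card:
  assumes "final2 U" "finite U" "\<forall>L\<in>U. is_line L" "\<forall>d. cnt U d \<le> m"
  shows "card U \<le> m"
proof (cases "U = {}")
  case True then show ?thesis by simp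
next
  case False
  then obtain L0 where L0: "L0 \<in> U" by blast
  have "\<forall>L\<in>U. slope L = slope L0"
  proof
    fix L assume L: "L \<in> U"
    show "slope L = slope L0"
    proof (rule ccontr)
      assume ne: "slope L \<noteq> slope L0"
      then have "L \<noteq> L0" by auto
      then show False using diff_slope_meet[of L L0] ne L L0 assms(1,3) unfolding final2_def by blast
    qed
  qed
  then have "U = {L\<in>U. slope L = slope L0}" by auto
  then have "card U = cnt U (slope L0)" unfolding cnt_def by simp
  then show ?thesis using assms(4) by simp
qed

lemma phase2:
  assumes "step2\<^sup>*\<^sup>* s t" "final2 (fst t)" "finite (fst s)" "\<forall>L\<in>fst s. is_line L"
    "\<forall>d. cnt (fst s) d \<le> m" "(card (fst s) + 1) div 2 \<le> m"
  shows "length (snd t) + card (fst t) \<le> length (snd s) + m"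
  using assms
proof (induction arbitrary: m rule: converse_rtranclp_induct)
  case base
  then show ?case using final2_card[of "fst t" m] by simp
next
  case (step s s')
  obtain p L1 L2 where st: "L1 \<in> fst s" "L2 \<in> fst s" "L1 \<noteq> L2"
      "slope L1 \<noteq> slope L2" "p \<in> L1" "p \<in> L2"
      "\<forall>L\<in>fst s. slope L \<noteq> slope L1 \<and> slope L \<noteq> slope L2 \<longrightarrow>
          cnt (fst s) (slope L) \<le> cnt (fst s) (slope L1) \<and>
          cnt (fst s) (slope L) \<le> cnt (fst s) (slope L2)"
      "s' = (fst s - {L1, L2}, snd s @ [p])" using step.hyps(1) unfolding step2_def by blast
  define U where "U = fst s"
  have finU: "finite U" using step.prems U_def by simp
  define C where "C d = {L\<in>U. slope L = d}" for d
  have cntC: "cnt U d = card (C d)" for d unfolding cnt_def C_def by simp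
  have finC: "finite (C d)" for d using finU unfolding C_def by simp
  have "L1 \<in> C (slope L1)" using st(1) unfolding C_def U_def by simp
  then have "0 < card (C (slope L1))" using finC[of "slope L1"] card_gt_0_iff by blast
  moreover have "card (C (slope L1)) \<le> m" using step.prems(4) cntC unfolding U_def by metis
  ultimately have m1: "1 \<le> m" by linarith
  have "{L1, L2} \<subseteq> U" using st(1,2) unfolding U_def by simp
  then have "card {L1, L2} \<le> card U" using finU card_mono by blast
  then have cU2: "2 \<le> card U" using st(3) by simp
  have cnt': "cnt (fst s') d \<le> m - 1" for d
  proof -
    have e: "{L\<in>fst s'. slope L = d} = C d - {L1, L2}" using st(8) unfolding C_def U_def by auto
    show ?thesis
    proof (cases "d = slope L1 \<or> d = slope L2")
      case True
      then obtain Li where Li: "Li \<in> C d" "Li \<in> {L1,L2}" using st unfolding C_def U_def by auto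
      have "C d - {L1,L2} \<subseteq> C d - {Li}" using Li(2) by blast
      then have "card (C d - {L1,L2}) \<le> card (C d - {Li})" using finC[of d] by (simp add: card_mono)
      also have "\<dots> = card (C d) - 1" using Li finC by simp
      finally have "card (C d - {L1,L2}) \<le> card (C d) - 1" .
      moreover have "card (C d) \<le> m" using step.prems(4) cntC unfolding U_def by metis
      ultimately have "card (C d - {L1,L2}) \<le> m - 1" by linarith
      then show ?thesis using e unfolding cnt_def by simp
    next
      case False
      have dn: "\<not> (d = slope L1 \<or> d = slope L2)" using False .
      from False have e2: "{L\<in>fst s'. slope L = d} = C d" using e unfolding C_def by auto
      show ?thesis
      proof (cases "C d = {}")
        case True then show ?thesis unfolding cnt_def e2 by simp
      next
        case False
        then obtain L where L: "L \<in> U" "slope L = d" unfolding C_def by auto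
        have nd: "slope L \<noteq> slope L1 \<and> slope L \<noteq> slope L2" using L dn by simp
        have le1: "card (C d) \<le> card (C (slope L1))" "card (C d) \<le> card (C (slope L2))"
          using st(7) L(1) nd cntC L(2) unfolding U_def by metis+
        show ?thesis
        proof (rule ccontr)
          assume "\<not> ?thesis"
          then have "card (C d) \<ge> m" using e2 unfolding cnt_def by simp
          then have "card (C (slope L1)) \<ge> m" "card (C (slope L2)) \<ge> m" using le1 by auto
          have "C d \<union> C (slope L1) \<union> C (slope L2) \<subseteq> U" unfolding C_def by auto
          then have "card (C d \<union> C (slope L1) \<union> C (slope L2)) \<le> card U" using finU card_mono by blast
          moreover have "card (C d \<union> C (slope L1) \<union> C (slope L2)) = card (C d) + card (C (slope L1)) + card (C (slope L2))"
          proof -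
            have d1: "C d \<inter> C (slope L1) = {}" using nd L(2) unfolding C_def by auto
            have d2: "(C d \<union> C (slope L1)) \<inter> C (slope L2) = {}" using nd L(2) st(4) unfolding C_def by auto
            have "card (C d \<union> C (slope L1) \<union> C (slope L2)) = card (C d \<union> C (slope L1)) + card (C (slope L2))"
              using d2 finC by (simp add: card_Un_disjoint)
            also have "card (C d \<union> C (slope L1)) = card (C d) + card (C (slope L1))"
              using d1 finC by (simp add: card_Un_disjoint)
            finally show ?thesis .
          qed
          ultimately have "3 * m \<le> card U" using \<open>card (C d) \<ge> m\<close> \<open>card (C (slope L1)) \<ge> m\<close> \<open>card (C (slope L2)) \<ge> m\<close> by linarith
          then show False using step.prems(5) m1 unfolding U_def by linarith
        qed
      qed
    qed
  qed
  have cards': "card (fst s') = card U - 2" using st finU unfolding U_def by (simp add: card_Diff_subset)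
  have "(card (fst s') + 1) div 2 \<le> m - 1" using cards' cU2 step.prems(5) unfolding U_def by linarith
  moreover have "finite (fst s')" "\<forall>L\<in>fst s'. is_line L" using st(8) finU step.prems(3) unfolding U_def by auto
  ultimately have "length (snd t) + card (fst t) \<le> length (snd s') + (m - 1)"
    using step.IH step.prems(1) cnt' by blast
  then show ?case using st(8) m1 by simp
qed



context
  fixes S :: "line set"
  assumes fin: "finite S" and lin: "\<forall>L\<in>S. is_line L" and sl: "card (slope ` S) \<le> 3"
begin

lemma main_aux:
  assumes r1: "step1\<^sup>*\<^sup>* (S, []) (U1, P1)" and f1: "final1 U1"
    and r2: "step2\<^sup>*\<^sup>* (U1, P1) (U2, P2)" and f2: "final2 U2"
    and H: "hitting_set S H"
  shows "5 * (length P2 + card U2) \<le> 7 * card H"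
proof -
  have I: "inv1 S (U1, P1)" using inv1_reach[OF fin lin sl r1] .
  have U1S: "U1 \<subseteq> S" and dP: "distinct P1"
    and c3: "\<And>r. r \<in> set P1 \<Longrightarrow> card (lines_at S r) = 3"
    and noU: "\<And>r. r \<in> set P1 \<Longrightarrow> lines_at S r \<inter> U1 = {}"
    and disj: "\<And>r r'. r \<in> set P1 \<Longrightarrow> r' \<in> set P1 \<Longrightarrow> r \<noteq> r' \<Longrightarrow> lines_at S r \<inter> lines_at S r' = {}"
    using I unfolding inv1_def[OF fin lin sl] by auto
  define Q where "Q = set P1"
  define g1 where "g1 = length P1"
  have finQ: "finite Q" unfolding Q_def by simp
  have g1Q: "g1 = card Q" unfolding g1_def Q_def using dP distinct_card by metis
  have finH: "finite H" and hit: "\<forall>L\<in>S. \<exists>p\<in>H. p \<in> L" using H unfolding hitting_set_def by auto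
  have finU1: "finite U1" using U1S fin finite_subset by blast
  define h where "h L = (SOME p. p \<in> H \<and> p \<in> L)" for L
  have hL: "h L \<in> H \<and> h L \<in> L" if "L \<in> S" for L
    unfolding h_def using hit that by (metis (mono_tags, lifting) someI_ex)
  have finLA: "finite (lines_at S p)" for p using finite_lines_at[OF fin lin sl] .
  have LAh: "L \<in> lines_at S (h L)" if "L \<in> S" for L using hL[OF that] that unfolding lines_at_def by simp
  have Fa: "h L \<notin> Q" if "L \<in> U1" for L
  proof
    assume "h L \<in> Q"
    then have "lines_at S (h L) \<inter> U1 = {}" using noU unfolding Q_def by blast
    then show False using LAh[of L] that U1S by blast
  qed
  have Fb: "h L \<notin> Q" if "r \<in> Q - H" "L \<in> lines_at S r" for r L
  proof
    assume hq: "h L \<in> Q"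
    have LS: "L \<in> S" using that(2) unfolding lines_at_def by simp
    have "h L \<noteq> r" using hL[OF LS] that(1) by blast
    then have "lines_at S r \<inter> lines_at S (h L) = {}" using disj hq that(1) unfolding Q_def by blast
    then show False using that(2) LAh[OF LS] by blast
  qed
  define X where "X = U1 \<union> (\<Union>r\<in>Q - H. lines_at S r)"
  have cUN: "card (\<Union>r\<in>Q - H. lines_at S r) = 3 * card (Q - H)"
  proof -
    have "card (\<Union>r\<in>Q - H. lines_at S r) = (\<Sum>r\<in>Q - H. card (lines_at S r))"
      using finQ finLA disj unfolding Q_def by (intro card_UN_disjoint) auto
    also have "\<dots> = (\<Sum>r\<in>Q - H. 3)" using c3 unfolding Q_def by simp
    finally show ?thesis by simp
  qed
  have cX: "card X = card U1 + 3 * card (Q - H)"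
  proof -
    have "U1 \<inter> (\<Union>r\<in>Q - H. lines_at S r) = {}" using noU unfolding Q_def by blast
    then show ?thesis unfolding X_def using finU1 finQ finLA cUN by (simp add: card_Un_disjoint)
  qed
  have subX: "X \<subseteq> (\<Union>p\<in>H - Q. lines_at S p)"
  proof
    fix L assume L: "L \<in> X"
    have LS: "L \<in> S" using L U1S unfolding X_def lines_at_def by auto
    have "h L \<notin> Q" using L Fa Fb unfolding X_def by blast
    then show "L \<in> (\<Union>p\<in>H - Q. lines_at S p)" using hL[OF LS] LAh[OF LS] by blast
  qed
  have finHQ: "finite (H - Q)" using finH by simp
  have "card X \<le> card (\<Union>p\<in>H - Q. lines_at S p)"
    using subX finHQ finLA by (intro card_mono) auto
  also have "\<dots> \<le> (\<Sum>p\<in>H - Q. card (lines_at S p))" using finHQ by (rule card_UN_le)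
  also have "\<dots> \<le> card (H - Q) * 3" using sum_bounded_above[of "H - Q" "\<lambda>p. card (lines_at S p)" 3] card_lines_at[OF fin lin sl] by simp
  finally have ineq1: "card U1 + 3 * card (Q - H) \<le> 3 * card (H - Q)" using cX by simp
  have c2: "card (lines_at S p \<inter> U1) \<le> 2" for p
  proof (rule ccontr)
    assume "\<not> ?thesis"
    then have "3 \<le> card (lines_at S p \<inter> U1)" by simp
    then obtain x y z where "x \<in> lines_at S p \<inter> U1" "y \<in> lines_at S p \<inter> U1" "z \<in> lines_at S p \<inter> U1"
      "x \<noteq> y" "x \<noteq> z" "y \<noteq> z" using three_distinct[of "lines_at S p \<inter> U1"] finU1 by blast
    then show False using f1 unfolding final1_def lines_at_def by blast
  qed
  have "U1 \<subseteq> (\<Union>p\<in>H - Q. lines_at S p \<inter> U1)"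
  proof
    fix L assume L: "L \<in> U1"
    then have LS: "L \<in> S" using U1S by blast
    show "L \<in> (\<Union>p\<in>H - Q. lines_at S p \<inter> U1)" using Fa[OF L] hL[OF LS] LAh[OF LS] L by blast
  qed
  then have "card U1 \<le> card (\<Union>p\<in>H - Q. lines_at S p \<inter> U1)"
    using finHQ finU1 by (intro card_mono) auto
  also have "\<dots> \<le> (\<Sum>p\<in>H - Q. card (lines_at S p \<inter> U1))" using finHQ by (rule card_UN_le)
  also have "\<dots> \<le> card (H - Q) * 2" using sum_bounded_above[of "H - Q" "\<lambda>p. card (lines_at S p \<inter> U1)" 2] c2 by simp
  finally have ineq2: "card U1 \<le> 2 * card (H - Q)" by simp
  have ineq3: "3 \<le> card (H - Q)" if pos: "0 < card (Q - H)"
  proof -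
    have "Q - H \<noteq> {}" using pos by (metis card.empty less_irrefl)
    then obtain r where r: "r \<in> Q - H" by blast
    have rQ: "r \<in> set P1" using r unfolding Q_def by simp
    have inj: "inj_on h (lines_at S r)"
    proof (rule inj_onI)
      fix L L' assume L: "L \<in> lines_at S r" and L': "L' \<in> lines_at S r" and e: "h L = h L'"
      have LS: "L \<in> S" "L' \<in> S" "r \<in> L" "r \<in> L'" using L L' unfolding lines_at_def by auto
      have "h L \<noteq> r" using hL[OF LS(1)] r by blast
      then show "L = L'" using two_points_eq[of L L' r "h L"] LS lin hL[OF LS(1)] hL[OF LS(2)] e by auto
    qed
    have "h ` lines_at S r \<subseteq> H - Q" using Fb[OF r] hL unfolding lines_at_def by auto
    then have "card (lines_at S r) \<le> card (H - Q)" using inj finHQ card_inj_on_le by blast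
    then show ?thesis using c3[OF rQ] by simp
  qed
  have ineq4: "cnt U1 d \<le> card H - g1" for d
  proof (cases "cnt U1 d = 0")
    case True then show ?thesis by simp
  next
    case False
    then have "{L\<in>U1. slope L = d} \<noteq> {}" unfolding cnt_def by (metis card.empty)
    then obtain L0 where L0: "L0 \<in> U1" "slope L0 = d" by blast
    have dS: "d \<in> slope ` S" using L0 U1S by blast
    define C where "C = {L\<in>S. slope L = d}"
    have finC: "finite C" using fin unfolding C_def by simp
    have injC: "inj_on h C"
    proof (rule inj_onI)
      fix L L' assume L: "L \<in> C" and L': "L' \<in> C" and e: "h L = h L'"
      have LS: "L \<in> S" "L' \<in> S" using L L' unfolding C_def by auto
      show "L = L'" using same_slope_eq[of L L' "h L"] L L' LS lin hL[OF LS(1)] hL[OF LS(2)] e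
        unfolding C_def by auto
    qed
    have "h ` C \<subseteq> H" using hL unfolding C_def by auto
    then have cCH: "card C \<le> card H" using injC finH card_inj_on_le by blast
    have exd: "\<exists>L. L \<in> lines_at S r \<and> slope L = d" if rQ: "r \<in> Q" for r
    proof -
      have "card (slope ` lines_at S r) = 3"
        using c3 rQ inj_slope_at[OF fin lin sl, of r] card_image unfolding Q_def by metis
      moreover have "slope ` lines_at S r \<subseteq> slope ` S" unfolding lines_at_def by auto
      ultimately have "slope ` lines_at S r = slope ` S"
        using sl fin by (metis card_seteq finite_imageI)
      then have "d \<in> slope ` lines_at S r" using dS by simp
      then show ?thesis by blast
    qed
    define \<phi> where "\<phi> r = (SOME L. L \<in> lines_at S r \<and> slope L = d)" for r
    have \<phi>: "\<phi> r \<in> lines_at S r \<and> slope (\<phi> r) = d" if "r \<in> Q" for r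
      unfolding \<phi>_def using someI_ex[OF exd[OF that]] .
    have inj\<phi>: "inj_on \<phi> Q"
    proof (rule inj_onI)
      fix r r' assume r: "r \<in> Q" and r': "r' \<in> Q" and e: "\<phi> r = \<phi> r'"
      show "r = r'"
      proof (rule ccontr)
        assume "r \<noteq> r'"
        then have "lines_at S r \<inter> lines_at S r' = {}" using disj r r' unfolding Q_def by blast
        then show False using \<phi>[OF r] \<phi>[OF r'] e by auto
      qed
    qed
    have "\<phi> ` Q \<subseteq> C - U1" using \<phi> noU unfolding C_def lines_at_def Q_def by blast
    then have cQ: "card Q \<le> card (C - U1)" using inj\<phi> finC card_inj_on_le by (metis finite_Diff)
    have "C \<inter> U1 = {L\<in>U1. slope L = d}" using U1S unfolding C_def by auto
    then have "card (C \<inter> U1) = cnt U1 d" unfolding cnt_def by simp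
    moreover have "card C = card (C \<inter> U1) + card (C - U1)" using finC card_Int_Diff by blast
    ultimately show ?thesis using cQ cCH g1Q by linarith
  qed
  have cQs: "card Q = card (Q \<inter> H) + card (Q - H)" using finQ card_Int_Diff by blast
  have cHs: "card H = card (Q \<inter> H) + card (H - Q)" using finH card_Int_Diff by (metis Int_commute)
  define m where "m = max (card H - g1) ((card U1 + 1) div 2)"
  have "length P2 + card U2 \<le> length P1 + m"
  proof -
    have a1: "\<forall>L\<in>U1. is_line L" using U1S lin by blast
    have a2: "\<forall>d. cnt U1 d \<le> m" using ineq4 unfolding m_def by (meson max.coboundedI1)
    have a3: "(card U1 + 1) div 2 \<le> m" unfolding m_def by simp
    show ?thesis using phase2[of "(U1, P1)" "(U2, P2)" m] r2 f2 finU1 a1 a2 a3 by simp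
  qed
  then have tot: "length P2 + card U2 \<le> g1 + m" unfolding g1_def .
  have "5 * ((card (Q \<inter> H) + card (Q - H)) + max (card (Q \<inter> H) + card (H - Q) - (card (Q \<inter> H) + card (Q - H))) ((card U1 + 1) div 2))
        \<le> 7 * (card (Q \<inter> H) + card (H - Q))"
    using arith_final[OF ineq1 ineq2 ineq3] by blast
  then have "5 * (g1 + m) \<le> 7 * card H" unfolding m_def using g1Q cQs cHs by simp
  moreover have "5 * (length P2 + card U2) \<le> 5 * (g1 + m)" using tot by simp
  ultimately show ?thesis by linarith
qed

end

theorem mainTheorem4:
  fixes S :: "line set" and pts :: "point list"
  assumes "finite S"
    and "\<forall>L\<in>S. is_line L"
    and "card (slope ` S) \<le> 3"
    and "greedy_output S pts"
  shows "real (length pts) \<le> 7 / 5 * real (hitting_number S)"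
proof -
  obtain U1 P1 U2 P2 and f :: "line \<Rightarrow> point" and xs where g:
      "step1\<^sup>*\<^sup>* (S, []) (U1, P1)" "final1 U1"
      "step2\<^sup>*\<^sup>* (U1, P1) (U2, P2)" "final2 U2"
      "distinct xs" "set xs = U2" "pts = P2 @ map f xs"
    using assms(4) unfolding greedy_output_def by blast
  define H0 where "H0 = (\<lambda>L. SOME p. p \<in> L) ` S"
  have "hitting_set S H0"
    unfolding hitting_set_def H0_def
  proof
    show "finite ((\<lambda>L. SOME p. p \<in> L) ` S)" using assms(1) by simp
    show "\<forall>L\<in>S. \<exists>p\<in>(\<lambda>L. SOME p. p \<in> L) ` S. p \<in> L"
      using assms(2) line_nonempty by (metis imageI someI_ex)
  qed
  then have "\<exists>k H. hitting_set S H \<and> card H = k" by blast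
  then have "\<exists>H. hitting_set S H \<and> card H = hitting_number S"
    unfolding hitting_number_def by (rule LeastI_ex)
  then obtain H where H: "hitting_set S H" "card H = hitting_number S" by blast
  have "5 * (length P2 + card U2) \<le> 7 * card H"
    using main_aux[OF assms(1-3) g(1-4) H(1)] .
  moreover have "length pts = length P2 + card U2" using g(5-7) distinct_card by fastforce
  ultimately have "5 * length pts \<le> 7 * hitting_number S" using H(2) by simp
  then have "5 * real (length pts) \<le> 7 * real (hitting_number S)" by linarith
  then show ?thesis by simp
qed

end
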